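(* Let $n\ge3$ and suppose $T=T_\lambda(r,m)$ acts linearly and inner faithfully on $\Bbbk\overline{Q}$ so that $g$ acts by a reflection: $g\cdot e_i=e_{n-(d+i)}$, $g\cdot a_i=\mu_ia^*_{n-(d+i+1)}$, $g\cdot a_i^*=\mu_i^*a_{n-(d+i+1)}$ for some integer $0<d\le n-1$ and $\mu_i,\mu_i^*\in\Bbbk^\times$. Let $\sigma$ be the quiver-Taft map of the action. (1) If $j$ is a vertex with $g\cdot j=j$, then there exist $c_j,c_j^*\in\Bbbk$ with $$\sigma(a_{j-1})=-c_j^*a_{j-1},\quad \sigma(a_{j-1}^* )=-\mu_j^{-1}\mu^*_{j-1}c_ja_j,\quad \sigma(a_j)=c_ja^*_{j-1},\quad \sigma(a_j^* )=c_j^*a_j^*.$$ (2) If $k$ is a vertex with $g\cdot k=k+1$ and $g\cdot(k+1)=k$, then there exists $c_k\in\Bbbk$ with $\sigma(a_k)=c_ke_k$ and $\sigma(a_k^* )=\lambda\mu_k^*c_ke_{k+1}$; if $c_k\neq0$ then $\lambda^2\mu_k\mu_k^*=1$. (3) If $i$ is neither $j-1$ nor $j$ for any vertex $j$ fixed by $g$, and is not a vertex $k$ as in (2), then $\sigma(a_i)=\sigma(a_i^* )=0$.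
   Context: Let $\Bbbk$ be a field, $r>1$ and $m$ positive integers with $r\mid m$, and $\lambda\in\Bbbk$ a primitive $r$-th root of unity, with $r$ coprime to the characteristic of $\Bbbk$. The generalized Taft algebra $T=T_\lambda(r,m)$ is the Hopf algebra generated by $g,x$ with relations $gx=\lambda xg$, $g^m=1$, $x^r=0$, $\Delta(g)=g\otimes g$, $\Delta(x)=1\otimes x+x\otimes g$, $\varepsilon(g)=1,\varepsilon(x)=0$, $S(g)=g^{-1}$, $S(x)=-xg^{-1}$. An action of $T$ on an algebra $A$ is a $T$-module algebra structure; so $g$ acts by an algebra automorphism and $x\cdot(ab)=a(x\cdot b)+(x\cdot a)(g\cdot b)$. It is inner faithful if no nonzero Hopf ideal $I$ of $T$ satisfies $I\cdot A=0$. Vertex indices are taken modulo $n$. $\overline{Q}$ has vertices $0,\dots,n-1$ and arrows $a_i:i\to i+1$, $a_i^*:i+1\to i$; in $\Bbbk\overline{Q}$, $e_i$ is the trivial path at $i$, $s(a),t(a)$ source and target, and $pq$ is concatenation ($p$ then $q$) if $t(p)=s(q)$, else $0$. A linear action: $g$ acts by a path-length-preserving automorphism ($g\cdot e_i=e_{g\cdot i}$) and $x$ maps vertices into the span of vertices and arrows into the span of vertices and arrows. Then there are scalars $\gamma_i$ with $x\cdot e_i=\gamma_ie_i-\gamma_i\lambda^{-1}e_{g\cdot i}$; the quiver-Taft map $\sigma$ is the linear map on the span of vertices and arrows with $\sigma(e_i)=0$ and $\sigma(a)=x\cdot a-\gamma_{t(a)}a+\gamma_{s(a)}\lambda^{-1}(g\cdot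 a)$ for arrows $a$. (It satisfies $\sigma(a)=e_{s(a)}\sigma(a)e_{g\cdot t(a)}$ and $\sigma(g\cdot a)=\lambda^{-1}g\cdot\sigma(a)$.) *)

theory Defs
  imports Main
begin

text \<open>Arrows: Fw i is a_i : i -> i+1, Bw i is a_i^* : i+1 -> i (indices mod n).\<close>
datatype arr = Fw nat | Bw nat

fun arr_idx :: "arr \<Rightarrow> nat" where
  "arr_idx (Fw i) = i" | "arr_idx (Bw i) = i"

fun asrc :: "nat \<Rightarrow> arr \<Rightarrow> nat" where
  "asrc n (Fw i) = i mod n" | "asrc n (Bw i) = (i + 1) mod n"

fun atgt :: "nat \<Rightarrow> arr \<Rightarrow> nat" where
  "atgt n (Fw i) = (i + 1) mod n" | "atgt n (Bw i) = i mod n"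

type_synonym path = "nat \<times> arr list"

fun chain :: "nat \<Rightarrow> nat \<Rightarrow> arr list \<Rightarrow> bool" where
  "chain n v [] = True"
| "chain n v (a # as) = (arr_idx a < n \<and> asrc n a = v \<and> chain n (atgt n a) as)"

definition valid_path :: "nat \<Rightarrow> path \<Rightarrow> bool" where
  "valid_path n p = (fst p < n \<and> chain n (fst p) (snd p))"

fun pend :: "nat \<Rightarrow> path \<Rightarrow> nat" where
  "pend n (v, []) = v"
| "pend n (v, as) = atgt n (last as)"

definition PA :: "nat \<Rightarrow> (path \<Rightarrow> 'k::field) set" where
  "PA n = {f. finite {p. f p \<noteq> 0} \<and> (\<forall>p. f p \<noteq> 0 \<longrightarrow> valid_path n p)}"

definition pzero :: "path \<Rightarrow> 'k::field" where
  "pzero = (\<lambda>_. 0)"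

definition padd :: "(path \<Rightarrow> 'k::field) \<Rightarrow> (path \<Rightarrow> 'k) \<Rightarrow> path \<Rightarrow> 'k" where
  "padd f h = (\<lambda>p. f p + h p)"

definition psmult :: "'k::field \<Rightarrow> (path \<Rightarrow> 'k) \<Rightarrow> path \<Rightarrow> 'k" where
  "psmult c f = (\<lambda>p. c * f p)"

text \<open>Multiplication = concatenation (p then q), extended bilinearly.\<close>
definition pmul :: "nat \<Rightarrow> (path \<Rightarrow> 'k::field) \<Rightarrow> (path \<Rightarrow> 'k) \<Rightarrow> path \<Rightarrow> 'k" where
  "pmul n f h = (\<lambda>(v, as). \<Sum>k\<in>{0..length as}.
      f (v, take k as) * h (pend n (v, take k as), drop k as))"

definition pone :: "nat \<Rightarrow> path \<Rightarrow> 'k::field" where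
  "pone n = (\<lambda>(v, as). if v < n \<and> as = [] then 1 else 0)"

definition vtx :: "nat \<Rightarrow> path \<Rightarrow> 'k::field" where
  "vtx i = (\<lambda>p. if p = (i, []) then 1 else 0)"

definition arrow :: "nat \<Rightarrow> arr \<Rightarrow> path \<Rightarrow> 'k::field" where
  "arrow n a = (\<lambda>p. if p = (asrc n a, [a]) then 1 else 0)"

text \<open>An element of T is given by its coefficients f(i,j) w.r.t. the basis x^i g^j,
  0 <= i < r, 0 <= j < m.\<close>
definition tB :: "nat \<Rightarrow> nat \<Rightarrow> (nat \<times> nat) set" where
  "tB r m = {..<r} \<times> {..<m}"

definition Tset :: "nat \<Rightarrow> nat \<Rightarrow> (nat \<times> nat \<Rightarrow> 'k::field) set" where
  "Tset r m = {f. \<forall>p. p \<notin> tB r m \<longrightarrow> f p = 0}"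

definition tbasis :: "nat \<times> nat \<Rightarrow> nat \<times> nat \<Rightarrow> 'k::field" where
  "tbasis q = (\<lambda>p. if p = q then 1 else 0)"

text \<open>(x^a g^b)(x^c g^e) = lam^(b c) x^(a+c) g^(b+e), using g x = lam x g, g^m = 1, x^r = 0.\<close>
definition tmul :: "'k::field \<Rightarrow> nat \<Rightarrow> nat \<Rightarrow> (nat \<times> nat \<Rightarrow> 'k) \<Rightarrow> (nat \<times> nat \<Rightarrow> 'k) \<Rightarrow> nat \<times> nat \<Rightarrow> 'k" where
  "tmul lam r m f h = (\<lambda>(i, j). if i < r \<and> j < m then
     (\<Sum>(a, b)\<in>tB r m. \<Sum>(c, e)\<in>tB r m.
        if a + c = i \<and> (b + e) mod m = j then lam ^ (b * c) * f (a, b) * h (c, e) else 0)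
     else 0)"

definition tsmult :: "'k::field \<Rightarrow> (nat \<times> nat \<Rightarrow> 'k) \<Rightarrow> nat \<times> nat \<Rightarrow> 'k" where
  "tsmult c f = (\<lambda>p. c * f p)"

definition tadd :: "(nat \<times> nat \<Rightarrow> 'k::field) \<Rightarrow> (nat \<times> nat \<Rightarrow> 'k) \<Rightarrow> nat \<times> nat \<Rightarrow> 'k" where
  "tadd f h = (\<lambda>p. f p + h p)"

definition tone :: "nat \<times> nat \<Rightarrow> 'k::field" where "tone = tbasis (0, 0)"
definition tx :: "nat \<times> nat \<Rightarrow> 'k::field" where "tx = tbasis (1, 0)"
definition tg :: "nat \<Rightarrow> nat \<times> nat \<Rightarrow> 'k::field" where "tg m = tbasis (0, 1 mod m)"
definition tginv :: "nat \<Rightarrow> nat \<times> nat \<Rightarrow> 'k::field" where "tginv m = tbasis (0, m - 1)"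

text \<open>T \<otimes> T, with coefficients w.r.t. the basis (x^i g^j) \<otimes> (x^k g^l).\<close>
type_synonym 'k tt = "(nat \<times> nat) \<times> (nat \<times> nat) \<Rightarrow> 'k"

definition tens :: "(nat \<times> nat \<Rightarrow> 'k::field) \<Rightarrow> (nat \<times> nat \<Rightarrow> 'k) \<Rightarrow> 'k tt" where
  "tens a b = (\<lambda>(p, q). a p * b q)"

definition ttadd :: "'k::field tt \<Rightarrow> 'k tt \<Rightarrow> 'k tt" where
  "ttadd f h = (\<lambda>pq. f pq + h pq)"

definition ttmul :: "'k::field \<Rightarrow> nat \<Rightarrow> nat \<Rightarrow> 'k tt \<Rightarrow> 'k tt \<Rightarrow> 'k tt" where
  "ttmul lam r m f h = (\<lambda>(p, q).
     \<Sum>(p1, q1)\<in>tB r m \<times> tB r m. \<Sum>(p2, q2)\<in>tB r m \<times> tB r m.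
       f (p1, q1) * h (p2, q2) * tmul lam r m (tbasis p1) (tbasis p2) p
         * tmul lam r m (tbasis q1) (tbasis q2) q)"

text \<open>Comultiplication: Delta(x^i g^j) = Delta(x)^i Delta(g)^j with
  Delta(x) = 1 \<otimes> x + x \<otimes> g, Delta(g) = g \<otimes> g.\<close>
definition delta_basis :: "'k::field \<Rightarrow> nat \<Rightarrow> nat \<Rightarrow> nat \<Rightarrow> nat \<Rightarrow> 'k tt" where
  "delta_basis lam r m i j =
     ttmul lam r m
       ((ttmul lam r m (ttadd (tens tone tx) (tens tx (tg m))) ^^ i) (tens tone tone))
       ((ttmul lam r m (tens (tg m) (tg m)) ^^ j) (tens tone tone))"

definition tdelta :: "'k::field \<Rightarrow> nat \<Rightarrow> nat \<Rightarrow> (nat \<times> nat \<Rightarrow> 'k) \<Rightarrow> 'k tt" where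
  "tdelta lam r m f = (\<lambda>pq. \<Sum>(i, j)\<in>tB r m. f (i, j) * delta_basis lam r m i j pq)"

text \<open>Counit: eps(x^i g^j) = [i = 0].\<close>
definition teps :: "nat \<Rightarrow> (nat \<times> nat \<Rightarrow> 'k::field) \<Rightarrow> 'k" where
  "teps m f = (\<Sum>j<m. f (0, j))"

text \<open>Antipode: S(x^i g^j) = S(g)^j S(x)^i with S(g) = g^(-1), S(x) = - x g^(-1).\<close>
definition antipode_basis :: "'k::field \<Rightarrow> nat \<Rightarrow> nat \<Rightarrow> nat \<Rightarrow> nat \<Rightarrow> nat \<times> nat \<Rightarrow> 'k" where
  "antipode_basis lam r m i j =
     tmul lam r m ((tmul lam r m (tginv m) ^^ j) tone)
       ((tmul lam r m (tsmult (-1) (tmul lam r m tx (tginv m))) ^^ i) tone)"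

definition tantipode :: "'k::field \<Rightarrow> nat \<Rightarrow> nat \<Rightarrow> (nat \<times> nat \<Rightarrow> 'k) \<Rightarrow> nat \<times> nat \<Rightarrow> 'k" where
  "tantipode lam r m f = (\<lambda>p. \<Sum>(i, j)\<in>tB r m. f (i, j) * antipode_basis lam r m i j p)"

text \<open>The subspace I \<otimes> T + T \<otimes> I of T \<otimes> T.\<close>
inductive_set ITTI :: "nat \<Rightarrow> nat \<Rightarrow> (nat \<times> nat \<Rightarrow> 'k::field) set \<Rightarrow> 'k tt set"
  for r m I where
  zero: "(\<lambda>_. 0) \<in> ITTI r m I"
| left: "z \<in> ITTI r m I \<Longrightarrow> a \<in> I \<Longrightarrow> b \<in> Tset r m \<Longrightarrow> ttadd z (tens a b) \<in> ITTI r m I"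
| right: "z \<in> ITTI r m I \<Longrightarrow> a \<in> Tset r m \<Longrightarrow> b \<in> I \<Longrightarrow> ttadd z (tens a b) \<in> ITTI r m I"

definition hopf_ideal :: "'k::field \<Rightarrow> nat \<Rightarrow> nat \<Rightarrow> (nat \<times> nat \<Rightarrow> 'k) set \<Rightarrow> bool" where
  "hopf_ideal lam r m I \<longleftrightarrow>
     I \<subseteq> Tset r m \<and> (\<lambda>_. 0) \<in> I \<and>
     (\<forall>f\<in>I. \<forall>h\<in>I. tadd f h \<in> I) \<and> (\<forall>c. \<forall>f\<in>I. tsmult c f \<in> I) \<and>
     (\<forall>a\<in>Tset r m. \<forall>f\<in>I. tmul lam r m a f \<in> I \<and> tmul lam r m f a \<in> I) \<and>
     (\<forall>f\<in>I. tdelta lam r m f \<in> ITTI r m I) \<and>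
     (\<forall>f\<in>I. teps m f = 0) \<and>
     (\<forall>f\<in>I. tantipode lam r m f \<in> I)"

definition tact :: "nat \<Rightarrow> nat \<Rightarrow> ((path \<Rightarrow> 'k::field) \<Rightarrow> (path \<Rightarrow> 'k)) \<Rightarrow> ((path \<Rightarrow> 'k) \<Rightarrow> (path \<Rightarrow> 'k))
    \<Rightarrow> (nat \<times> nat \<Rightarrow> 'k) \<Rightarrow> (path \<Rightarrow> 'k) \<Rightarrow> path \<Rightarrow> 'k" where
  "tact r m gop xop f a = (\<lambda>p. \<Sum>(i, j)\<in>tB r m. f (i, j) * (xop ^^ i) ((gop ^^ j) a) p)"

definition is_linear_on :: "nat \<Rightarrow> ((path \<Rightarrow> 'k::field) \<Rightarrow> (path \<Rightarrow> 'k)) \<Rightarrow> bool" where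
  "is_linear_on n F \<longleftrightarrow> (\<forall>a\<in>PA n. F a \<in> PA n) \<and>
     (\<forall>a\<in>PA n. \<forall>b\<in>PA n. F (padd a b) = padd (F a) (F b)) \<and>
     (\<forall>c. \<forall>a\<in>PA n. F (psmult c a) = psmult c (F a))"

definition taft_module_algebra :: "nat \<Rightarrow> 'k::field \<Rightarrow> nat \<Rightarrow> nat
    \<Rightarrow> ((path \<Rightarrow> 'k) \<Rightarrow> (path \<Rightarrow> 'k)) \<Rightarrow> ((path \<Rightarrow> 'k) \<Rightarrow> (path \<Rightarrow> 'k)) \<Rightarrow> bool" where
  "taft_module_algebra n lam r m gop xop \<longleftrightarrow>
     is_linear_on n gop \<and> is_linear_on n xop \<and>
     bij_betw gop (PA n) (PA n) \<and>
     (\<forall>a\<in>PA n. \<forall>b\<in>PA n. gop (pmul n a b) = pmul n (gop a) (gop b)) \<and>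
     gop (pone n) = pone n \<and>
     (\<forall>a\<in>PA n. \<forall>b\<in>PA n. xop (pmul n a b) = padd (pmul n a (xop b)) (pmul n (xop a) (gop b))) \<and>
     xop (pone n) = pzero \<and>
     (\<forall>a\<in>PA n. gop (xop a) = psmult lam (xop (gop a))) \<and>
     (\<forall>a\<in>PA n. (gop ^^ m) a = a) \<and>
     (\<forall>a\<in>PA n. (xop ^^ r) a = pzero)"

definition linear_action :: "nat \<Rightarrow> ((path \<Rightarrow> 'k::field) \<Rightarrow> (path \<Rightarrow> 'k)) \<Rightarrow> ((path \<Rightarrow> 'k) \<Rightarrow> (path \<Rightarrow> 'k)) \<Rightarrow> bool" where
  "linear_action n gop xop \<longleftrightarrow>
     (\<forall>i<n. \<exists>j<n. gop (vtx i) = vtx j) \<and>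
     (\<forall>a. arr_idx a < n \<longrightarrow> (\<forall>p. gop (arrow n a) p \<noteq> 0 \<longrightarrow> length (snd p) = 1)) \<and>
     (\<forall>i<n. \<forall>p. xop (vtx i) p \<noteq> 0 \<longrightarrow> snd p = []) \<and>
     (\<forall>a. arr_idx a < n \<longrightarrow> (\<forall>p. xop (arrow n a) p \<noteq> 0 \<longrightarrow> length (snd p) \<le> 1))"

definition inner_faithful :: "nat \<Rightarrow> 'k::field \<Rightarrow> nat \<Rightarrow> nat
    \<Rightarrow> ((path \<Rightarrow> 'k) \<Rightarrow> (path \<Rightarrow> 'k)) \<Rightarrow> ((path \<Rightarrow> 'k) \<Rightarrow> (path \<Rightarrow> 'k)) \<Rightarrow> bool" where
  "inner_faithful n lam r m gop xop \<longleftrightarrow>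
     (\<forall>I. hopf_ideal lam r m I \<longrightarrow> (\<forall>f\<in>I. \<forall>a\<in>PA n. tact r m gop xop f a = pzero)
          \<longrightarrow> I \<subseteq> {\<lambda>_. 0})"

definition quiver_taft_map :: "nat \<Rightarrow> 'k::field \<Rightarrow> ((path \<Rightarrow> 'k) \<Rightarrow> (path \<Rightarrow> 'k)) \<Rightarrow> ((path \<Rightarrow> 'k) \<Rightarrow> (path \<Rightarrow> 'k))
    \<Rightarrow> (nat \<Rightarrow> 'k) \<Rightarrow> arr \<Rightarrow> path \<Rightarrow> 'k" where
  "quiver_taft_map n lam gop xop gamma a = (\<lambda>p.
     xop (arrow n a) p - gamma (atgt n a) * arrow n a p
       + gamma (asrc n a) * inverse lam * gop (arrow n a) p)"

end

theory Submission
  imports Defs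
begin


lemma pmul_vtx_left: "pmul n (vtx i) h (v, as) = (if v = i then h (v, as) else 0)"
proof -
  have "pmul n (vtx i) h (v, as) = (\<Sum>k\<in>{0..length as}. if k = 0 then (if v = i then h (v, as) else 0) else 0)"
    unfolding pmul_def split
    by (rule sum.cong) (auto simp: vtx_def)
  also have "\<dots> = (if v = i then h (v, as) else 0)" by (simp add: sum.delta)
  finally show ?thesis .
qed

lemma pmul_vtx_right: "pmul n h (vtx i) (v, as) = (if pend n (v, as) = i then h (v, as) else 0)"
proof -
  have "pmul n h (vtx i) (v, as) = (\<Sum>k\<in>{0..length as}. if k = length as then (if pend n (v, as) = i then h (v, as) else 0) else 0)"
    unfolding pmul_def split
    by (rule sum.cong) (auto simp: vtx_def)
  also have "\<dots> = (if pend n (v, as) = i then h (v, as) else 0)" by (simp add: sum.delta)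
  finally show ?thesis .
qed

lemma pmul_padd_left: "pmul n (padd f1 f2) h = padd (pmul n f1 h) (pmul n f2 h)"
  unfolding pmul_def padd_def by (auto simp: algebra_simps sum.distrib)
lemma pmul_padd_right: "pmul n h (padd f1 f2) = padd (pmul n h f1) (pmul n h f2)"
  unfolding pmul_def padd_def by (auto simp: algebra_simps sum.distrib)
lemma pmul_psmult_left: "pmul n (psmult c f) h = psmult c (pmul n f h)"
  unfolding pmul_def psmult_def by (auto simp: algebra_simps sum_distrib_left)
lemma pmul_psmult_right: "pmul n h (psmult c f) = psmult c (pmul n h f)"
  unfolding pmul_def psmult_def by (auto simp: algebra_simps sum_distrib_left)

lemma vtx_PA: "i < n \<Longrightarrow> vtx i \<in> PA n"
  unfolding PA_def vtx_def valid_path_def by auto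
lemma arrow_PA: "arr_idx a < n \<Longrightarrow> arrow n a \<in> PA n"
  unfolding PA_def arrow_def valid_path_def
  by (cases a) auto
lemma padd_PA: "f \<in> PA n \<Longrightarrow> h \<in> PA n \<Longrightarrow> padd f h \<in> PA n"
  unfolding PA_def padd_def
  by (auto intro: finite_subset[of _ "{p. f p \<noteq> 0} \<union> {p. h p \<noteq> 0}"]; metis add.right_neutral)
lemma psmult_PA: "f \<in> PA n \<Longrightarrow> psmult c f \<in> PA n"
  unfolding PA_def psmult_def
  by (auto intro: finite_subset[of _ "{p. f p \<noteq> 0}"])

lemma modalg_facts:
  assumes "taft_module_algebra n lam r m gop xop"
  shows "\<And>a. a \<in> PA n \<Longrightarrow> gop a \<in> PA n"
    and "\<And>a b. a \<in> PA n \<Longrightarrow> b \<in> PA n \<Longrightarrow> gop (padd a b) = padd (gop a) (gop b)"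
    and "\<And>a c. a \<in> PA n \<Longrightarrow> gop (psmult c a) = psmult c (gop a)"
    and "\<And>a. a \<in> PA n \<Longrightarrow> xop a \<in> PA n"
    and "\<And>a b. a \<in> PA n \<Longrightarrow> b \<in> PA n \<Longrightarrow> xop (padd a b) = padd (xop a) (xop b)"
    and "\<And>a c. a \<in> PA n \<Longrightarrow> xop (psmult c a) = psmult c (xop a)"
    and "\<And>a b. a \<in> PA n \<Longrightarrow> b \<in> PA n \<Longrightarrow> xop (pmul n a b) = padd (pmul n a (xop b)) (pmul n (xop a) (gop b))"
    and "\<And>a. a \<in> PA n \<Longrightarrow> gop (xop a) = psmult lam (xop (gop a))"
    and "\<And>a. a \<in> PA n \<Longrightarrow> (xop ^^ r) a = pzero"
  using assms unfolding taft_module_algebra_def is_linear_on_def by auto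

lemma pend_arrow[simp]: "pend n (v, [a]) = atgt n a" by simp

lemma sigma_support:
  fixes gop xop :: "(path \<Rightarrow> 'k::field) \<Rightarrow> (path \<Rightarrow> 'k)"
  assumes modalg: "taft_module_algebra n lam r m gop xop"
    and lin: "linear_action n gop xop"
    and A: "arr_idx A < n" and B: "arr_idx B < n"
    and gA: "gop (arrow n A) = psmult mu (arrow n B)"
    and sB: "asrc n B = G (asrc n A)" and tB: "atgt n B = G (atgt n A)"
    and gt: "gop (vtx (atgt n A)) = vtx (G (atgt n A))"
    and xs: "xop (vtx (asrc n A)) = padd (psmult (gamma (asrc n A)) (vtx (asrc n A)))
               (psmult (- (gamma (asrc n A) * inverse lam)) (vtx (G (asrc n A))))"
    and xt: "xop (vtx (atgt n A)) = padd (psmult (gamma (atgt n A)) (vtx (atgt n A)))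
               (psmult (- (gamma (atgt n A) * inverse lam)) (vtx (G (atgt n A))))"
    and nz: "quiver_taft_map n lam gop xop gamma A p \<noteq> 0"
  shows "fst p = asrc n A \<and> pend n p = G (atgt n A) \<and> length (snd p) \<le> 1 \<and> valid_path n p"
proof -
  obtain v as where p: "p = (v, as)" by fastforce
  let ?s = "asrc n A" and ?t = "atgt n A"
  have n0: "n > 0" using A by auto
  have sn: "?s < n" and tn: "?t < n" using n0 by (cases A; simp)+
  have APA: "(arrow n A :: path \<Rightarrow> 'k) \<in> PA n" using A by (rule arrow_PA)
  have arrA: "(arrow n A q :: 'k) \<noteq> 0 \<Longrightarrow> q = (?s, [A])" for q by (simp add: arrow_def split: if_splits)
  have arrB: "(arrow n B q :: 'k) \<noteq> 0 \<Longrightarrow> q = (G ?s, [B])" for q using sB by (simp add: arrow_def split: if_splits)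
  have e1: "(arrow n A :: path \<Rightarrow> 'k) = pmul n (vtx ?s) (arrow n A)"
  proof
    fix q :: path obtain w bs where "q = (w, bs)" by fastforce
    then show "(arrow n A q :: 'k) = pmul n (vtx ?s) (arrow n A) q"
      using arrA[of q] by (cases "arrow n A (w, bs) = (0::'k)") (auto simp: pmul_vtx_left)
  qed
  have e2: "(arrow n A :: path \<Rightarrow> 'k) = pmul n (arrow n A) (vtx ?t)"
  proof
    fix q :: path obtain w bs where "q = (w, bs)" by fastforce
    then show "(arrow n A q :: 'k) = pmul n (arrow n A) (vtx ?t) q"
      using arrA[of q] by (cases "arrow n A (w, bs) = (0::'k)") (auto simp: pmul_vtx_right)
  qed
  have X1: "xop (arrow n A) = padd (pmul n (vtx ?s) (xop (arrow n A))) (pmul n (xop (vtx ?s)) (gop (arrow n A)))"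
    using modalg_facts(7)[OF modalg vtx_PA[OF sn] APA] e1 by simp
  have X2: "xop (arrow n A) = padd (pmul n (arrow n A) (xop (vtx ?t))) (pmul n (xop (arrow n A)) (gop (vtx ?t)))"
    using modalg_facts(7)[OF modalg APA vtx_PA[OF tn]] e2 by simp
  have sig: "quiver_taft_map n lam gop xop gamma A p = xop (arrow n A) p - gamma ?t * arrow n A p
       + gamma ?s * inverse lam * (mu * arrow n B p)"
    unfolding quiver_taft_map_def gA psmult_def by simp
  have fstp: "v = ?s"
  proof (rule ccontr)
    assume ne: "v \<noteq> ?s"
    have "xop (arrow n A) p = pmul n (xop (vtx ?s)) (gop (arrow n A)) p"
      using fun_cong[OF X1, of p] ne p by (simp add: padd_def pmul_vtx_left)
    also have "\<dots> = - (gamma ?s * inverse lam) * (mu * arrow n B p)"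
      using ne p arrB[of p] unfolding xs gA
      by (simp only: pmul_padd_left pmul_psmult_left) (auto simp: padd_def psmult_def pmul_vtx_left)
    finally have "quiver_taft_map n lam gop xop gamma A p = - gamma ?t * arrow n A p"
      using sig by simp
    also have "\<dots> = 0" using arrA[of p] ne p by auto
    finally show False using nz by simp
  qed
  have pendp: "pend n p = G ?t"
  proof (rule ccontr)
    assume ne: "pend n p \<noteq> G ?t"
    have "xop (arrow n A) p = pmul n (arrow n A) (xop (vtx ?t)) p"
      using fun_cong[OF X2, of p] ne p by (simp add: padd_def pmul_vtx_right gt)
    also have "\<dots> = gamma ?t * arrow n A p"
      using ne p arrA[of p] unfolding xt
      by (simp only: pmul_padd_right pmul_psmult_right) (auto simp: padd_def psmult_def pmul_vtx_right)
    finally have "quiver_taft_map n lam gop xop gamma A p = gamma ?s * inverse lam * (mu * arrow n B p)"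
      using sig by simp
    also have "\<dots> = 0" using arrB[of p] ne p tB by auto
    finally show False using nz by simp
  qed
  have lenval: "length (snd p) \<le> 1 \<and> valid_path n p"
  proof (cases "xop (arrow n A) p = 0")
    case True
    then have dis: "(arrow n A p :: 'k) \<noteq> 0 \<or> (arrow n B p :: 'k) \<noteq> 0" using sig nz by auto
    have Gs: "G ?s < n" using sB[symmetric] n0 by (cases B) auto
    show ?thesis using dis arrA[of p] arrB[of p] A B sB n0 Gs
      by (cases A; cases B) (auto simp: valid_path_def)
  next
    case False
    have "xop (arrow n A) \<in> PA n" using modalg_facts(4)[OF modalg APA] .
    then have "valid_path n p" using False p unfolding PA_def by auto
    moreover have "length (snd p) \<le> 1" using lin A False p unfolding linear_action_def by auto
    ultimately show ?thesis by simp
  qed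
  show ?thesis using fstp pendp lenval p by simp
qed

lemma path_cases:
  assumes "valid_path n p" "length (snd p) \<le> 1"
  shows "(\<exists>v. p = (v, []) \<and> v < n) \<or> (\<exists>b. p = (asrc n b, [b]) \<and> arr_idx b < n)"
proof -
  obtain v as where p: "p = (v, as)" by fastforce
  show ?thesis
  proof (cases as)
    case Nil then show ?thesis using assms p by (auto simp: valid_path_def)
  next
    case (Cons b bs)
    then have "bs = []" using assms p by auto
    then show ?thesis using assms p Cons by (auto simp: valid_path_def)
  qed
qed

lemma sigma_form:
  fixes gop xop :: "(path \<Rightarrow> 'k::field) \<Rightarrow> (path \<Rightarrow> 'k)"
  assumes modalg: "taft_module_algebra n lam r m gop xop"
    and lin: "linear_action n gop xop"
    and A: "arr_idx A < n" and B: "arr_idx B < n"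
    and gA: "gop (arrow n A) = psmult mu (arrow n B)"
    and sB: "asrc n B = G (asrc n A)" and tB: "atgt n B = G (atgt n A)"
    and gt: "gop (vtx (atgt n A)) = vtx (G (atgt n A))"
    and xs: "xop (vtx (asrc n A)) = padd (psmult (gamma (asrc n A)) (vtx (asrc n A)))
               (psmult (- (gamma (asrc n A) * inverse lam)) (vtx (G (asrc n A))))"
    and xt: "xop (vtx (atgt n A)) = padd (psmult (gamma (atgt n A)) (vtx (atgt n A)))
               (psmult (- (gamma (atgt n A) * inverse lam)) (vtx (G (atgt n A))))"
    and nz: "quiver_taft_map n lam gop xop gamma A p \<noteq> 0"
  shows "(p = (asrc n A, []) \<and> asrc n A = G (atgt n A)) \<or>
         (\<exists>b. arr_idx b < n \<and> p = (asrc n b, [b]) \<and> asrc n b = asrc n A \<and> atgt n b = G (atgt n A))"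
proof -
  have H: "fst p = asrc n A \<and> pend n p = G (atgt n A) \<and> length (snd p) \<le> 1 \<and> valid_path n p"
    by (rule sigma_support[OF assms])
  then show ?thesis using path_cases[of n p] by auto
qed

lemma gamma_rel:
  fixes gop xop :: "(path \<Rightarrow> 'k::field) \<Rightarrow> (path \<Rightarrow> 'k)"
  assumes modalg: "taft_module_algebra n lam r m gop xop"
    and i: "i < n" and j: "j < n"
    and g1: "gop (vtx i) = vtx j" and g2: "gop (vtx j) = vtx i"
    and x1: "xop (vtx i) = padd (psmult (gamma i) (vtx i)) (psmult (- (gamma i * inverse lam)) (vtx j))"
    and x2: "xop (vtx j) = padd (psmult (gamma j) (vtx j)) (psmult (- (gamma j * inverse lam)) (vtx i))"
    and l1: "lam \<noteq> 1" and l0: "lam \<noteq> 0"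
  shows "gamma i = lam * gamma j"
proof -
  have "gop (xop (vtx i)) = psmult lam (xop (gop (vtx i)))"
    using modalg_facts(8)[OF modalg vtx_PA[OF i]] .
  also have "gop (xop (vtx i)) = padd (psmult (gamma i) (vtx j)) (psmult (- (gamma i * inverse lam)) (vtx i))"
    unfolding x1
    by (simp add: modalg_facts(2,3)[OF modalg] vtx_PA[OF i] vtx_PA[OF j] psmult_PA g1 g2)
  finally have "padd (psmult (gamma i) (vtx j)) (psmult (- (gamma i * inverse lam)) (vtx i)) (j, [])
     = psmult lam (xop (vtx j)) (j, [])" using g1 by simp
  then have E: "gamma i - (if i = j then gamma i * inverse lam else 0)
     = lam * (gamma j - (if i = j then gamma j * inverse lam else 0))"
    unfolding x2 by (auto simp: padd_def psmult_def vtx_def)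
  show ?thesis
  proof (cases "i = j")
    case False then show ?thesis using E by simp
  next
    case True
    then have "gamma i * lam - gamma i = lam * (gamma i * lam - gamma i)"
      using E l0 by (simp add: field_simps)
    then have "gamma i * ((lam - 1) * (lam - 1)) = 0" by (simp add: algebra_simps)
    then have "gamma i = 0" using l1 by simp
    then show ?thesis using True by simp
  qed
qed

lemma sigma_expand:
  "quiver_taft_map n lam gop xop gamma A = padd (xop (arrow n A))
     (padd (psmult (- gamma (atgt n A)) (arrow n A)) (psmult (gamma (asrc n A) * inverse lam) (gop (arrow n A))))"
  unfolding quiver_taft_map_def padd_def psmult_def by (auto simp: algebra_simps)

lemma sigma_PA:
  assumes modalg: "taft_module_algebra n lam r m gop xop" and A: "arr_idx A < n"
  shows "quiver_taft_map n lam gop xop gamma A \<in> PA n"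
  unfolding sigma_expand
  by (intro padd_PA psmult_PA modalg_facts(1,4)[OF modalg] arrow_PA[OF A])

lemma sigma_g:
  fixes gop xop :: "(path \<Rightarrow> 'k::field) \<Rightarrow> (path \<Rightarrow> 'k)"
  assumes modalg: "taft_module_algebra n lam r m gop xop"
    and A: "arr_idx A < n" and B: "arr_idx B < n"
    and gA: "gop (arrow n A) = psmult mu (arrow n B)"
    and sB: "gamma (asrc n A) = lam * gamma (asrc n B)" and tB: "gamma (atgt n A) = lam * gamma (atgt n B)"
    and l0: "lam \<noteq> 0"
  shows "psmult mu (quiver_taft_map n lam gop xop gamma B)
       = psmult (inverse lam) (gop (quiver_taft_map n lam gop xop gamma A))"
proof -
  have APA: "(arrow n A :: path \<Rightarrow> 'k) \<in> PA n" and BPA: "(arrow n B :: path \<Rightarrow> 'k) \<in> PA n"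
    using arrow_PA A B by auto
  have xA: "xop (arrow n A) \<in> PA n" using modalg_facts(4)[OF modalg APA] .
  have gB: "gop (arrow n B) \<in> PA n" using modalg_facts(1)[OF modalg BPA] .
  have gxA: "gop (xop (arrow n A)) = psmult lam (psmult mu (xop (arrow n B)))"
    using modalg_facts(8)[OF modalg APA] modalg_facts(6)[OF modalg BPA] gA by simp
  have ggA: "gop (gop (arrow n A)) = psmult mu (gop (arrow n B))"
    using gA modalg_facts(3)[OF modalg BPA] by simp
  have "gop (quiver_taft_map n lam gop xop gamma A) = padd (gop (xop (arrow n A)))
     (padd (psmult (- gamma (atgt n A)) (gop (arrow n A))) (psmult (gamma (asrc n A) * inverse lam) (gop (gop (arrow n A)))))"
    unfolding sigma_expand
    by (simp add: modalg_facts(2,3)[OF modalg] padd_PA psmult_PA APA xA modalg_facts(1)[OF modalg])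
  also have "\<dots> = padd (psmult lam (psmult mu (xop (arrow n B))))
     (padd (psmult (- gamma (atgt n A)) (psmult mu (arrow n B))) (psmult (gamma (asrc n A) * inverse lam) (psmult mu (gop (arrow n B)))))"
    using gxA ggA gA by simp
  finally have E: "gop (quiver_taft_map n lam gop xop gamma A) = padd (psmult lam (psmult mu (xop (arrow n B))))
     (padd (psmult (- gamma (atgt n A)) (psmult mu (arrow n B))) (psmult (gamma (asrc n A) * inverse lam) (psmult mu (gop (arrow n B)))))" .
  show ?thesis
  proof
    fix p
    show "psmult mu (quiver_taft_map n lam gop xop gamma B) p = psmult (inverse lam) (gop (quiver_taft_map n lam gop xop gamma A)) p"
      unfolding E unfolding sigma_expand padd_def psmult_def sB tB
      using l0 by (simp add: field_simps)
  qed
qed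



lemma modM: "0 < (s::nat) \<Longrightarrow> s \<le> 2*n \<Longrightarrow> (2*n - s) mod n = (if s \<le> n then n - s else 2*n - s)"
proof -
  assume a: "0 < s" "s \<le> 2*n"
  show ?thesis
  proof (cases "s \<le> n")
    case True
    then have "2*n - s = (n - s) + n" by simp
    moreover have "n - s < n" using True a by simp
    ultimately have "(2*n - s) mod n = n - s" by (metis mod_add_self2 mod_less)
    then show ?thesis using True by simp
  next
    case False then show ?thesis using a by simp
  qed
qed

lemma mod_suc: "(x::nat) < n \<Longrightarrow> Suc x mod n = (if Suc x = n then 0 else Suc x)"
  by auto
lemma mod_pred: "(j::nat) < n \<Longrightarrow> (j + n - 1) mod n = (if j = 0 then n - 1 else j - 1)"
proof -
  assume a: "j < n"
  show ?thesis
  proof (cases "j = 0")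
    case True
    then have "j + n - 1 = n - 1" by simp
    moreover have "n - 1 < n" using a by simp
    ultimately show ?thesis using True by simp
  next
    case False
    then have "j + n - 1 = (j - 1) + n" by simp
    moreover have "j - 1 < n" using a by simp
    ultimately show ?thesis using False by (metis mod_add_self2 mod_less)
  qed
qed

lemma F1: "1 < n \<Longrightarrow> (x::nat) < n \<Longrightarrow> Suc x mod n \<noteq> x"
  using mod_suc[of x n] by auto
lemma F2: "2 < n \<Longrightarrow> (x::nat) < n \<Longrightarrow> Suc (Suc x mod n) mod n \<noteq> x"
  using mod_suc[of x n] mod_suc[of "Suc x mod n" n] by (cases "Suc x = n") auto
lemma F3: "(a::nat) < n \<Longrightarrow> b < n \<Longrightarrow> Suc a mod n = Suc b mod n \<Longrightarrow> a = b"
  using mod_suc[of a n] mod_suc[of b n] by (auto split: if_splits)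
lemma F4: "(j::nat) < n \<Longrightarrow> Suc ((j + n - 1) mod n) mod n = j"
proof -
  assume j: "j < n"
  have a: "(j + n - 1) mod n < n" using j by simp
  show ?thesis using mod_pred[OF j] mod_suc[OF a] j by (auto split: if_splits)
qed
lemma F5: "(i::nat) < n \<Longrightarrow> (Suc i mod n + n - 1) mod n = i"
proof -
  assume i: "i < n"
  have a: "Suc i mod n < n" using i by simp
  show ?thesis using mod_pred[OF a] mod_suc[OF i] i by (auto split: if_splits)
qed

locale refl_act =
  fixes n d r m :: nat and lam :: "'k::field"
    and gop xop :: "(path \<Rightarrow> 'k) \<Rightarrow> (path \<Rightarrow> 'k)"
    and mu mus gamma :: "nat \<Rightarrow> 'k"
  assumes r_gt1: "r > 1"
    and lam_root: "lam ^ r = 1" and lam_prim: "\<forall>k. 0 < k \<and> k < r \<longrightarrow> lam ^ k \<noteq> 1"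
    and n_ge3: "n \<ge> 3" and d_pos: "0 < d" and d_le: "d \<le> n - 1"
    and modalg: "taft_module_algebra n lam r m gop xop"
    and lin: "linear_action n gop xop"
    and mu_nz: "\<forall>i<n. mu i \<noteq> 0" and mus_nz: "\<forall>i<n. mus i \<noteq> 0"
    and g_vtx: "\<forall>i<n. gop (vtx i) = vtx ((2 * n - (d + i)) mod n)"
    and g_Fw: "\<forall>i<n. gop (arrow n (Fw i)) = psmult (mu i) (arrow n (Bw ((2 * n - (d + i + 1)) mod n)))"
    and g_Bw: "\<forall>i<n. gop (arrow n (Bw i)) = psmult (mus i) (arrow n (Fw ((2 * n - (d + i + 1)) mod n)))"
    and gamma: "\<forall>i<n. xop (vtx i) =
                  padd (psmult (gamma i) (vtx i))
                       (psmult (- (gamma i * inverse lam)) (vtx ((2 * n - (d + i)) mod n)))"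
begin

definition G :: "nat \<Rightarrow> nat" where "G i = (2 * n - (d + i)) mod n"

lemma n0: "n > 0" using n_ge3 by simp
lemma l1: "lam \<noteq> 1" using lam_prim r_gt1 by (metis power_one_right zero_less_one)
lemma l0: "lam \<noteq> 0" using lam_root r_gt1 by (metis one_neq_zero power_0_left zero_less_iff_neq_zero less_trans zero_less_one)

lemma Gexp: "i < n \<Longrightarrow> G i = (if d + i \<le> n then n - (d + i) else 2 * n - (d + i))"
  unfolding G_def using d_pos d_le by (intro modM) auto
lemma Gexp1: "i < n \<Longrightarrow> (2 * n - (d + i + 1)) mod n = (if d + i + 1 \<le> n then n - (d + i + 1) else 2 * n - (d + i + 1))"
  using d_pos d_le by (intro modM) auto

lemma Gl: "G i < n" unfolding G_def using n0 by simp
lemma Gmod[simp]: "G i mod n = G i" unfolding G_def by simp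
lemma GG: "i < n \<Longrightarrow> G (G i) = i"
proof -
  assume i: "i < n"
  have a: "G (G i) = (if d + G i \<le> n then n - (d + G i) else 2 * n - (d + G i))" using Gexp Gl i by blast
  show ?thesis using a Gexp[OF i] d_pos d_le i by (simp del: Gmod split: if_splits; arith)
qed

lemma gv: "i < n \<Longrightarrow> gop (vtx i) = vtx (G i)" using g_vtx G_def by auto
lemma xv: "i < n \<Longrightarrow> xop (vtx i) = padd (psmult (gamma i) (vtx i)) (psmult (- (gamma i * inverse lam)) (vtx (G i)))"
  using gamma G_def by auto

lemma grel: "i < n \<Longrightarrow> gamma i = lam * gamma (G i)"
  using gamma_rel[OF modalg, of i "G i" gamma] Gl GG gv xv l0 l1 by simp

abbreviation "sig \<equiv> quiver_taft_map n lam gop xop gamma"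
definition bI :: "nat \<Rightarrow> nat" where "bI i = (2 * n - (d + i + 1)) mod n"

lemma bI_lt: "bI i < n" unfolding bI_def using n0 by simp
lemma bIexp: "i < n \<Longrightarrow> bI i = (if d + i + 1 \<le> n then n - (d + i + 1) else 2 * n - (d + i + 1))"
  unfolding bI_def by (rule Gexp1)
lemma bI1: "i < n \<Longrightarrow> Suc (bI i) mod n = G i"
proof -
  assume i: "i < n"
  have b: "bI i = (if d + i + 1 \<le> n then n - (d + i + 1) else 2 * n - (d + i + 1))" using bIexp[OF i] .
  have g: "G i = (if d + i \<le> n then n - (d + i) else 2 * n - (d + i))" using Gexp[OF i] .
  consider (a) "d + i + 1 \<le> n" | (b) "d + i = n" | (c) "n < d + i" by linarith
  then show ?thesis
  proof cases
    case a
    then have e: "Suc (bI i) = n - (d + i)" "n - (d + i) < n" "G i = n - (d + i)" using b g d_pos by auto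
    then show ?thesis by simp
  next
    case b
    then have e: "Suc (bI i) = n" "G i = 0" using bIexp[OF i] g d_pos by auto
    then show ?thesis by simp
  next
    case c
    then have e: "Suc (bI i) = 2 * n - (d + i)" "2 * n - (d + i) < n" "G i = 2 * n - (d + i)"
      using b g d_pos i d_le by auto
    then show ?thesis by simp
  qed
qed
lemma bI2: "i < n \<Longrightarrow> bI i = G (Suc i mod n)"
proof -
  assume i: "i < n"
  have s: "Suc i mod n < n" using n0 by simp
  have b: "bI i = (if d + i + 1 \<le> n then n - (d + i + 1) else 2 * n - (d + i + 1))" using bIexp[OF i] .
  show ?thesis
  proof (cases "Suc i = n")
    case True
    then have "Suc i mod n = 0" by simp
    then have "G (Suc i mod n) = n - d" using Gexp[of 0] n0 d_le by simp
    moreover have "bI i = n - d" using b True d_pos d_le by auto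
    ultimately show ?thesis by simp
  next
    case False
    then have si: "Suc i mod n = Suc i" "Suc i < n" using i by auto
    have "G (Suc i) = (if d + Suc i \<le> n then n - (d + Suc i) else 2 * n - (d + Suc i))" using Gexp[OF si(2)] .
    then show ?thesis using b si(1) by simp
  qed
qed

lemma gF: "i < n \<Longrightarrow> gop (arrow n (Fw i)) = psmult (mu i) (arrow n (Bw (bI i)))"
  using g_Fw bI_def by auto
lemma gB: "i < n \<Longrightarrow> gop (arrow n (Bw i)) = psmult (mus i) (arrow n (Fw (bI i)))"
  using g_Bw bI_def by auto

lemma asrc_lt: "asrc n a < n" using n0 by (cases a) auto
lemma atgt_lt: "atgt n a < n" using n0 by (cases a) auto

lemma sform:
  assumes A: "arr_idx A < n" and nz: "sig A p \<noteq> 0"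
  shows "(p = (asrc n A, []) \<and> asrc n A = G (atgt n A)) \<or>
         (\<exists>b. arr_idx b < n \<and> p = (asrc n b, [b]) \<and> asrc n b = asrc n A \<and> atgt n b = G (atgt n A))"
proof (cases A)
  case (Fw i)
  then have i: "i < n" using A by simp
  have sB: "asrc n (Bw (bI i)) = G (asrc n A)" using Fw i bI1[OF i] by simp
  have tB: "atgt n (Bw (bI i)) = G (atgt n A)" using Fw i bI2[OF i] bI_lt[of i] by simp
  have gA: "gop (arrow n A) = psmult (mu i) (arrow n (Bw (bI i)))" using Fw gF[OF i] by simp
  show ?thesis
    by (rule sigma_form[OF modalg lin A _ gA sB tB gv[OF atgt_lt] xv[OF asrc_lt] xv[OF atgt_lt] nz])
       (simp add: bI_lt)
next
  case (Bw i)
  then have i: "i < n" using A by simp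
  have sB: "asrc n (Fw (bI i)) = G (asrc n A)" using Bw i bI2[OF i] bI_lt[of i] by simp
  have tB: "atgt n (Fw (bI i)) = G (atgt n A)" using Bw i bI1[OF i] by simp
  have gA: "gop (arrow n A) = psmult (mus i) (arrow n (Fw (bI i)))" using Bw gB[OF i] by simp
  show ?thesis
    by (rule sigma_form[OF modalg lin A _ gA sB tB gv[OF atgt_lt] xv[OF asrc_lt] xv[OF atgt_lt] nz])
       (simp add: bI_lt)
qed

lemma sgF: "i < n \<Longrightarrow> psmult (mu i) (sig (Bw (bI i))) = psmult (inverse lam) (gop (sig (Fw i)))"
proof -
  assume i: "i < n"
  have sB: "gamma (asrc n (Fw i)) = lam * gamma (asrc n (Bw (bI i)))" using i bI1[OF i] grel[OF i] by simp
  have sk: "Suc i mod n < n" using n0 by simp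
  have tB: "gamma (atgt n (Fw i)) = lam * gamma (atgt n (Bw (bI i)))"
    using bI2[OF i] bI_lt[of i] grel[OF sk] by simp
  show ?thesis by (rule sigma_g[OF modalg _ _ gF[OF i] sB tB l0]) (simp_all add: i bI_lt)
qed
lemma sgB: "i < n \<Longrightarrow> psmult (mus i) (sig (Fw (bI i))) = psmult (inverse lam) (gop (sig (Bw i)))"
proof -
  assume i: "i < n"
  have sk: "Suc i mod n < n" using n0 by simp
  have sB: "gamma (asrc n (Bw i)) = lam * gamma (asrc n (Fw (bI i)))"
    using bI2[OF i] bI_lt[of i] grel[OF sk] by simp
  have tB: "gamma (atgt n (Bw i)) = lam * gamma (atgt n (Fw (bI i)))" using i bI1[OF i] grel[OF i] by simp
  show ?thesis by (rule sigma_g[OF modalg _ _ gB[OF i] sB tB l0]) (simp_all add: i bI_lt)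
qed

lemma single_arrow:
  assumes "\<And>p. sig A p \<noteq> 0 \<Longrightarrow> p = (asrc n b, [b])"
  shows "sig A = psmult (sig A (asrc n b, [b])) (arrow n b)"
proof
  fix p show "sig A p = psmult (sig A (asrc n b, [b])) (arrow n b) p"
    using assms[of p] by (cases "sig A p = 0") (auto simp: psmult_def arrow_def)
qed

lemma single_vtx:
  assumes "\<And>p. sig A p \<noteq> 0 \<Longrightarrow> p = (v, [])"
  shows "sig A = psmult (sig A (v, [])) (vtx v)"
proof
  fix p show "sig A p = psmult (sig A (v, [])) (vtx v) p"
    using assms[of p] by (cases "sig A p = 0") (auto simp: psmult_def vtx_def)
qed

lemma x_eq_sig: "gamma (atgt n A) = 0 \<Longrightarrow> gamma (asrc n A) = 0 \<Longrightarrow> xop (arrow n A) = sig A"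
  unfolding quiver_taft_map_def by simp

lemma iter1:
  assumes a: "a \<in> PA n" and x: "xop a = psmult c a"
  shows "(xop ^^ k) a = psmult (c ^ k) a"
proof (induction k)
  case 0 then show ?case by (simp add: psmult_def)
next
  case (Suc k)
  have "(xop ^^ Suc k) a = xop (psmult (c^k) a)" using Suc.IH by simp
  also have "\<dots> = psmult (c^k) (psmult c a)" using modalg_facts(6)[OF modalg a] x by simp
  also have "\<dots> = psmult (c^Suc k) a" by (simp add: psmult_def algebra_simps)
  finally show ?case .
qed

lemma iter2:
  assumes a: "a \<in> PA n" and b: "b \<in> PA n" and x: "xop a = psmult c b" and y: "xop b = psmult e a"
  shows "(xop ^^ (2 * k)) a = psmult ((c * e) ^ k) a"
proof (induction k)
  case 0 then show ?case by (simp add: psmult_def)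
next
  case (Suc k)
  have "(xop ^^ (2 * Suc k)) a = xop (xop ((xop ^^ (2 * k)) a))" by simp
  also have "\<dots> = xop (xop (psmult ((c * e) ^ k) a))" using Suc.IH by simp
  also have "\<dots> = xop (psmult ((c * e) ^ k) (psmult c b))" using modalg_facts(6)[OF modalg a] x by simp
  also have "\<dots> = psmult ((c * e) ^ k) (psmult c (psmult e a))"
    by (simp add: modalg_facts(6)[OF modalg] b y psmult_PA)
  also have "\<dots> = psmult ((c * e) ^ Suc k) a" by (simp add: psmult_def algebra_simps)
  finally show ?case .
qed

lemma pzero_PA: "pzero \<in> PA n" unfolding PA_def pzero_def by simp

lemma nil1: "a \<in> PA n \<Longrightarrow> a q = 1 \<Longrightarrow> xop a = psmult c a \<Longrightarrow> c = 0"
proof -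
  assume a: "a \<in> PA n" "a q = 1" "xop a = psmult c a"
  have "psmult (c ^ r) a = pzero" using iter1[OF a(1) a(3), of r] modalg_facts(9)[OF modalg a(1)] by simp
  then have "c ^ r * a q = 0" unfolding psmult_def pzero_def by meson
  then show "c = 0" using a(2) by simp
qed

lemma nil2: "a \<in> PA n \<Longrightarrow> b \<in> PA n \<Longrightarrow> a q = 1 \<Longrightarrow> xop a = psmult c b \<Longrightarrow> xop b = psmult e a \<Longrightarrow> c * e = 0"
proof -
  assume a: "a \<in> PA n" "b \<in> PA n" "a q = 1" "xop a = psmult c b" "xop b = psmult e a"
  have "(xop ^^ (r + r)) a = (xop ^^ r) ((xop ^^ r) a)" by (simp add: funpow_add)
  also have "\<dots> = pzero" using modalg_facts(9)[OF modalg] a(1) pzero_PA by simp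
  finally have "psmult ((c * e) ^ r) a = pzero" using iter2[OF a(1,2,4,5), of r] by (simp add: mult_2)
  then have "(c * e) ^ r * a q = 0" unfolding psmult_def pzero_def by meson
  then show "c * e = 0" using a(3) by simp
qed

lemma GS: "x < n \<Longrightarrow> G x = Suc (G (Suc x mod n)) mod n"
  using bI1 bI2 by metis

lemma gsm: "i < n \<Longrightarrow> gop (psmult c (vtx i)) = psmult c (vtx (G i))"
  using modalg_facts(3)[OF modalg vtx_PA] gv by simp
lemma gsa: "arr_idx a < n \<Longrightarrow> gop (psmult c (arrow n a)) = psmult c (gop (arrow n a))"
  using modalg_facts(3)[OF modalg arrow_PA] by simp

lemma case2:
  assumes k: "k < n" and Gk: "G k = Suc k mod n"
  shows "\<exists>c. sig (Fw k) = psmult c (vtx k) \<and> sig (Bw k) = psmult (lam * mus k * c) (vtx (Suc k mod n))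
            \<and> (c \<noteq> 0 \<longrightarrow> lam ^ 2 * mu k * mus k = 1)"
proof -
  have sk: "Suc k mod n < n" using n0 by simp
  have GGk: "G (Suc k mod n) = k" using GG[OF k] Gk by simp
  have n1: "1 < n" using n_ge3 by simp
  have s1: "p = (k, [])" if "sig (Fw k) p \<noteq> 0" for p
  proof -
    from sform[of "Fw k" p] that k
    have "(p = (k, [])) \<or> (\<exists>b. arr_idx b < n \<and> p = (asrc n b, [b]) \<and> asrc n b = k \<and> atgt n b = k)"
      using GGk by simp
    then show ?thesis
    proof
      assume "\<exists>b. arr_idx b < n \<and> p = (asrc n b, [b]) \<and> asrc n b = k \<and> atgt n b = k"
      then obtain b where b: "arr_idx b < n" "asrc n b = k" "atgt n b = k" by blast
      then show ?thesis using F1[OF n1 k] F1[OF n1, of "arr_idx b"] by (cases b) auto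
    qed
  qed
  have s2: "p = (Suc k mod n, [])" if "sig (Bw k) p \<noteq> 0" for p
  proof -
    from sform[of "Bw k" p] that k
    have "(p = (Suc k mod n, [])) \<or> (\<exists>b. arr_idx b < n \<and> p = (asrc n b, [b]) \<and> asrc n b = Suc k mod n \<and> atgt n b = Suc k mod n)"
      using Gk by simp
    then show ?thesis
    proof
      assume "\<exists>b. arr_idx b < n \<and> p = (asrc n b, [b]) \<and> asrc n b = Suc k mod n \<and> atgt n b = Suc k mod n"
      then obtain b where b: "arr_idx b < n" "asrc n b = Suc k mod n" "atgt n b = Suc k mod n" by blast
      then show ?thesis using F1[OF n1 sk] F1[OF n1, of "arr_idx b"] by (cases b) auto
    qed
  qed
  define c where "c = sig (Fw k) (k, [])"
  define c' where "c' = sig (Bw k) (Suc k mod n, [])"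
  have e1: "sig (Fw k) = psmult c (vtx k)" unfolding c_def by (rule single_vtx) (rule s1)
  have e2: "sig (Bw k) = psmult c' (vtx (Suc k mod n))" unfolding c'_def by (rule single_vtx) (rule s2)
  have bk: "bI k = k" using bI2[OF k] GGk by simp
  have r1: "psmult (mu k) (sig (Bw k)) = psmult (inverse lam) (gop (sig (Fw k)))"
    using sgF[OF k] bk by simp
  have "mu k * c' = inverse lam * c"
    using fun_cong[OF r1, of "(Suc k mod n, [])"] unfolding e1 e2 gsm[OF k] Gk
    by (simp add: psmult_def vtx_def)
  moreover
  have r2: "psmult (mus k) (sig (Fw k)) = psmult (inverse lam) (gop (sig (Bw k)))"
    using sgB[OF k] bk by simp
  have "mus k * c = inverse lam * c'"
    using fun_cong[OF r2, of "(k, [])"] unfolding e1 e2 gsm[OF sk] GGk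
    by (simp add: psmult_def vtx_def)
  then have c'v: "c' = lam * mus k * c" using l0 by (simp add: field_simps)
  ultimately have "mu k * (lam * mus k * c) = inverse lam * c" by simp
  then have "lam ^ 2 * mu k * mus k * c = c" using l0 by (simp add: field_simps power2_eq_square)
  then have "c \<noteq> 0 \<longrightarrow> lam ^ 2 * mu k * mus k = 1"
    by (metis mult.left_neutral mult_cancel_right)
  then show ?thesis using e1 e2 c'v by blast
qed

lemma case3:
  assumes i: "i < n"
    and h1: "\<forall>j<n. G j = j \<longrightarrow> i \<noteq> (j + n - 1) mod n \<and> i \<noteq> j"
    and h2: "\<not> (G i = Suc i mod n \<and> G (Suc i mod n) = i)"
  shows "sig (Fw i) = pzero \<and> sig (Bw i) = pzero"
proof -
  have si: "Suc i mod n < n" using n0 by simp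
  have GSi: "G i = Suc (G (Suc i mod n)) mod n" using GS[OF i] .
  have nfix1: "G (Suc i mod n) \<noteq> Suc i mod n"
  proof
    assume "G (Suc i mod n) = Suc i mod n"
    then have "i \<noteq> (Suc i mod n + n - 1) mod n" using h1 si by blast
    then show False using F5[OF i] by simp
  qed
  have nfix0: "G i \<noteq> i" using h1 i by blast
  have F: "sig (Fw i) p = 0" for p
  proof (rule ccontr)
    assume nz: "sig (Fw i) p \<noteq> 0"
    from sform[OF _ nz] i
    have "(i = G (Suc i mod n)) \<or>
         (\<exists>b. arr_idx b < n \<and> asrc n b = i \<and> atgt n b = G (Suc i mod n))" by auto
    then show False
    proof
      assume a: "i = G (Suc i mod n)"
      then have "G i = Suc i mod n" using GG[OF si] by metis
      then show False using h2 a by metis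
    next
      assume "\<exists>b. arr_idx b < n \<and> asrc n b = i \<and> atgt n b = G (Suc i mod n)"
      then obtain b where b: "arr_idx b < n" "asrc n b = i" "atgt n b = G (Suc i mod n)" by blast
      show False
      proof (cases b)
        case (Fw b')
        then show False using b nfix1 by auto
      next
        case (Bw b')
        then have "Suc (G (Suc i mod n)) mod n = i" using b by auto
        then show False using GSi nfix0 by simp
      qed
    qed
  qed
  have B: "sig (Bw i) p = 0" for p
  proof (rule ccontr)
    assume nz: "sig (Bw i) p \<noteq> 0"
    have A: "arr_idx (Bw i) < n" using i by simp
    have as: "asrc n (Bw i) = Suc i mod n" "atgt n (Bw i) = i" using i by simp_all
    have "(p = (asrc n (Bw i), []) \<and> asrc n (Bw i) = G (atgt n (Bw i))) \<or>
         (\<exists>b. arr_idx b < n \<and> p = (asrc n b, [b]) \<and> asrc n b = asrc n (Bw i) \<and> atgt n b = G (atgt n (Bw i)))"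
      by (rule sform[OF A nz])
    then have "(Suc i mod n = G i) \<or>
         (\<exists>b. arr_idx b < n \<and> asrc n b = Suc i mod n \<and> atgt n b = G i)" unfolding as by blast
    then show False
    proof
      assume a: "Suc i mod n = G i"
      then have "G (Suc i mod n) = i" using GG[OF i] by metis
      then show False using h2 a by metis
    next
      assume "\<exists>b. arr_idx b < n \<and> asrc n b = Suc i mod n \<and> atgt n b = G i"
      then obtain b where b: "arr_idx b < n" "asrc n b = Suc i mod n" "atgt n b = G i" by blast
      show False
      proof (cases b)
        case (Fw b')
        have b'n: "b' < n" using b(1) Fw by simp
        have e1: "b' = Suc i mod n" using b(2) Fw b'n by simp
        have e2: "Suc b' mod n = Suc (G (Suc i mod n)) mod n" using b(3) Fw GSi by simp
        have "b' = G (Suc i mod n)" using F3[OF b'n Gl e2] .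
        then show False using nfix1 e1 by metis
      next
        case (Bw b')
        have b'n: "b' < n" using b(1) Bw by simp
        have e1: "Suc b' mod n = Suc i mod n" using b(2) Bw by simp
        have e2: "b' = G i" using b(3) Bw b'n by simp
        have "b' = i" using F3[OF b'n i e1] .
        then show False using nfix0 e2 by metis
      qed
    qed
  qed
  show ?thesis using F B unfolding pzero_def by auto
qed

lemma sform3:
  assumes A: "arr_idx A < n" and nz: "sig A p \<noteq> 0"
  shows "(asrc n A = G (atgt n A) \<and> p = (asrc n A, [])) \<or>
         (\<exists>b'. b' < n \<and> p = (b', [Fw b']) \<and> b' = asrc n A \<and> Suc b' mod n = G (atgt n A)) \<or>
         (\<exists>b'. b' < n \<and> p = (Suc b' mod n, [Bw b']) \<and> Suc b' mod n = asrc n A \<and> b' = G (atgt n A))"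
proof -
  have "(p = (asrc n A, []) \<and> asrc n A = G (atgt n A)) \<or>
         (\<exists>b. arr_idx b < n \<and> p = (asrc n b, [b]) \<and> asrc n b = asrc n A \<and> atgt n b = G (atgt n A))"
    by (rule sform[OF A nz])
  then show ?thesis
  proof
    assume "\<exists>b. arr_idx b < n \<and> p = (asrc n b, [b]) \<and> asrc n b = asrc n A \<and> atgt n b = G (atgt n A)"
    then obtain b where b: "arr_idx b < n" "p = (asrc n b, [b])" "asrc n b = asrc n A" "atgt n b = G (atgt n A)" by blast
    show ?thesis
    proof (cases b)
      case (Fw b')
      then have "b' < n" using b(1) by simp
      then show ?thesis using b Fw by auto
    next
      case (Bw b')
      then have "b' < n" using b(1) by simp
      then show ?thesis using b Bw by auto
    qed
  qed auto
qed

lemma case1: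
  assumes j: "j < n" and Gj: "G j = j"
  defines "i \<equiv> (j + n - 1) mod n"
  shows "\<exists>c cs. sig (Fw i) = psmult (- cs) (arrow n (Fw i))
              \<and> sig (Bw i) = psmult (- (inverse (mu j) * mus i * c)) (arrow n (Fw j))
              \<and> sig (Fw j) = psmult c (arrow n (Bw i))
              \<and> sig (Bw j) = psmult cs (arrow n (Bw j))"
proof -
  have n1: "1 < n" and n2: "2 < n" using n_ge3 by simp_all
  have i: "i < n" unfolding i_def using n0 by simp
  have sij: "Suc i mod n = j" unfolding i_def using F4[OF j] .
  have sj: "Suc j mod n < n" using n0 by simp
  have nij: "i \<noteq> j" using F1[OF n1 i] sij by metis
  have nsj: "Suc j mod n \<noteq> j" using F1[OF n1 j] .
  have nsji: "Suc j mod n \<noteq> i" using F2[OF n2 i] sij by metis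
  have nssj: "Suc (Suc j mod n) mod n \<noteq> j" using F2[OF n2 j] .
  have GSj: "G (Suc j mod n) = i"
  proof -
    have "Suc (G (Suc j mod n)) mod n = Suc i mod n" using GS[OF j] Gj sij by metis
    then show ?thesis using F3[OF Gl i] by blast
  qed
  have Gi: "G i = Suc j mod n" using GG[OF sj] GSj by metis
  have bIi: "bI i = j" using bI2[OF i] sij Gj by metis
  have bIj: "bI j = i" using bI2[OF j] GSj by metis
  have Ai: "arr_idx (Fw i) < n" "arr_idx (Bw i) < n" using i by simp_all
  have Aj: "arr_idx (Fw j) < n" "arr_idx (Bw j) < n" using j by simp_all
  have asFi: "asrc n (Fw i) = i" "atgt n (Fw i) = j" using i sij by simp_all
  have asBi: "asrc n (Bw i) = j" "atgt n (Bw i) = i" using i sij by simp_all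
  have asFj: "asrc n (Fw j) = j" "atgt n (Fw j) = Suc j mod n" using j by simp_all
  have asBj: "asrc n (Bw j) = Suc j mod n" "atgt n (Bw j) = j" using j by simp_all

  have S1: "p = (asrc n (Fw i), [Fw i])" if nz: "sig (Fw i) p \<noteq> 0" for p
    using sform3[OF Ai(1) nz] unfolding asFi Gj using nij nsji by auto
  have S2: "p = (asrc n (Bw j), [Bw j])" if nz: "sig (Bw j) p \<noteq> 0" for p
  proof -
    have D: "(Suc j mod n = j \<and> p = (Suc j mod n, [])) \<or>
         (\<exists>b'. b' < n \<and> p = (b', [Fw b']) \<and> b' = Suc j mod n \<and> Suc b' mod n = j) \<or>
         (\<exists>b'. b' < n \<and> p = (Suc b' mod n, [Bw b']) \<and> Suc b' mod n = Suc j mod n \<and> b' = j)"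
      using sform3[OF Aj(2) nz] unfolding asBj Gj .
    show ?thesis using D nsj nssj asBj by auto
  qed
  have S3: "p = (asrc n (Bw i), [Bw i])" if nz: "sig (Fw j) p \<noteq> 0" for p
  proof -
    have D: "(j = i \<and> p = (j, [])) \<or>
         (\<exists>b'. b' < n \<and> p = (b', [Fw b']) \<and> b' = j \<and> Suc b' mod n = i) \<or>
         (\<exists>b'. b' < n \<and> p = (Suc b' mod n, [Bw b']) \<and> Suc b' mod n = j \<and> b' = i)"
      using sform3[OF Aj(1) nz] unfolding asFj GSj .
    show ?thesis using D nij nsji asBi sij by auto
  qed
  have S4: "p = (asrc n (Fw j), [Fw j])" if nz: "sig (Bw i) p \<noteq> 0" for p
  proof -
    have D: "(j = Suc j mod n \<and> p = (j, [])) \<or>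
         (\<exists>b'. b' < n \<and> p = (b', [Fw b']) \<and> b' = j \<and> Suc b' mod n = Suc j mod n) \<or>
         (\<exists>b'. b' < n \<and> p = (Suc b' mod n, [Bw b']) \<and> Suc b' mod n = j \<and> b' = Suc j mod n)"
      using sform3[OF Ai(2) nz] unfolding asBi Gi .
    show ?thesis using D nsj nssj asFj by auto
  qed
  define al where "al = sig (Fw i) (asrc n (Fw i), [Fw i])"
  define be where "be = sig (Bw j) (asrc n (Bw j), [Bw j])"
  define c where "c = sig (Fw j) (asrc n (Bw i), [Bw i])"
  define ka where "ka = sig (Bw i) (asrc n (Fw j), [Fw j])"
  have e1: "sig (Fw i) = psmult al (arrow n (Fw i))" unfolding al_def by (rule single_arrow) (rule S1)
  have e2: "sig (Bw j) = psmult be (arrow n (Bw j))" unfolding be_def by (rule single_arrow) (rule S2)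
  have e3: "sig (Fw j) = psmult c (arrow n (Bw i))" unfolding c_def by (rule single_arrow) (rule S3)
  have e4: "sig (Bw i) = psmult ka (arrow n (Fw j))" unfolding ka_def by (rule single_arrow) (rule S4)
  have mui: "mu i \<noteq> 0" and muj: "mu j \<noteq> 0" and musi: "mus i \<noteq> 0" using mu_nz mus_nz i j by auto
  have R1: "mu i * be = inverse lam * (al * mu i)"
  proof -
    have "psmult (mu i) (sig (Bw j)) = psmult (inverse lam) (gop (psmult al (arrow n (Fw i))))"
      using sgF[OF i] bIi e1 by simp
    also have "\<dots> = psmult (inverse lam) (psmult al (psmult (mu i) (arrow n (Bw j))))"
      using gsa[OF Ai(1)] gF[OF i] bIi by simp
    finally have "psmult (mu i) (sig (Bw j)) (asrc n (Bw j), [Bw j]) =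
        psmult (inverse lam) (psmult al (psmult (mu i) (arrow n (Bw j)))) (asrc n (Bw j), [Bw j])" by simp
    then show ?thesis unfolding be_def by (simp add: psmult_def arrow_def)
  qed
  have R2: "mu j * ka = inverse lam * (c * mus i)"
  proof -
    have "psmult (mu j) (sig (Bw i)) = psmult (inverse lam) (gop (psmult c (arrow n (Bw i))))"
      using sgF[OF j] bIj e3 by simp
    also have "\<dots> = psmult (inverse lam) (psmult c (psmult (mus i) (arrow n (Fw j))))"
      using gsa[OF Ai(2)] gB[OF i] bIi by simp
    finally have "psmult (mu j) (sig (Bw i)) (asrc n (Fw j), [Fw j]) =
        psmult (inverse lam) (psmult c (psmult (mus i) (arrow n (Fw j)))) (asrc n (Fw j), [Fw j])" by simp
    then show ?thesis unfolding ka_def by (simp add: psmult_def arrow_def)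
  qed
  have "mu i * be = mu i * (inverse lam * al)" using R1 by (simp add: algebra_simps)
  then have beq: "be = inverse lam * al" using mui by simp
  have "mu j * ka = mu j * (inverse lam * inverse (mu j) * mus i * c)" using R2 muj by (simp add: algebra_simps)
  then have kaq: "ka = inverse lam * inverse (mu j) * mus i * c" using muj by simp
  have K: "al = - be \<and> ka = - (inverse (mu j) * mus i * c)"
  proof (cases "lam = -1")
    case True
    then show ?thesis using beq kaq by simp
  next
    case False
    have lsq: "lam * lam \<noteq> 1"
    proof
      assume "lam * lam = 1"
      then have "(lam - 1) * (lam + 1) = 0" by (simp add: algebra_simps)
      moreover have "lam + 1 \<noteq> 0" using False by (simp add: eq_neg_iff_add_eq_0[symmetric])
      ultimately show False using l1 by simp
    qed
    have gj: "gamma j = 0"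
    proof -
      have h: "gamma j = lam * gamma j" using grel[OF j] unfolding Gj .
      have "(lam - 1) * gamma j = lam * gamma j - gamma j" by (simp add: algebra_simps)
      also have "\<dots> = 0" by (subst h[symmetric]) simp
      finally have "(lam - 1) * gamma j = 0" .
      then show ?thesis using l1 by simp
    qed
    have gi: "gamma i = 0" and gsj: "gamma (Suc j mod n) = 0"
    proof -
      have a: "gamma i = lam * gamma (Suc j mod n)" using grel[OF i] unfolding Gi .
      have b: "gamma (Suc j mod n) = lam * gamma i" using grel[OF sj] unfolding GSj .
      have h: "gamma i = lam * (lam * gamma i)" using a unfolding b .
      have "(lam * lam - 1) * gamma i = lam * (lam * gamma i) - gamma i" by (simp add: algebra_simps)
      also have "\<dots> = 0" by (subst h[symmetric]) simp
      finally have "(lam * lam - 1) * gamma i = 0" .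
      then show "gamma i = 0" using lsq by simp
      then show "gamma (Suc j mod n) = 0" using b by simp
    qed
    have x1: "xop (arrow n (Fw i)) = psmult al (arrow n (Fw i))"
      using x_eq_sig[of "Fw i"] asFi gi gj e1 by simp
    have "al = 0" by (rule nil1[OF arrow_PA[OF Ai(1)] _ x1, of "(asrc n (Fw i), [Fw i])"]) (simp add: arrow_def)
    have x2: "xop (arrow n (Fw j)) = psmult c (arrow n (Bw i))"
      using x_eq_sig[of "Fw j"] asFj gj gsj e3 by simp
    have x3: "xop (arrow n (Bw i)) = psmult ka (arrow n (Fw j))"
      using x_eq_sig[of "Bw i"] asBi gi gj e4 by simp
    have "c * ka = 0"
      by (rule nil2[OF arrow_PA[OF Aj(1)] arrow_PA[OF Ai(2)] _ x2 x3, of "(asrc n (Fw j), [Fw j])"])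
         (simp add: arrow_def)
    then have "c * c * (inverse lam * inverse (mu j) * mus i) = 0" using kaq by (simp add: algebra_simps)
    then have "c = 0" using l0 muj musi by simp
    then show ?thesis using \<open>al = 0\<close> beq kaq by simp
  qed
  show ?thesis using e1 e2 e3 e4 K by auto
qed

end

theorem lemma3p11:
  fixes n r m d :: nat and lam :: "'k::field"
    and gop xop :: "(path \<Rightarrow> 'k) \<Rightarrow> (path \<Rightarrow> 'k)"
    and mu mus gamma :: "nat \<Rightarrow> 'k"
  assumes r_gt1: "r > 1" and m_pos: "m > 0" and r_dvd_m: "r dvd m"
    and lam_root: "lam ^ r = 1" and lam_prim: "\<forall>k. 0 < k \<and> k < r \<longrightarrow> lam ^ k \<noteq> 1"
    and char_r: "of_nat r \<noteq> (0::'k)"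
    and n_ge3: "n \<ge> 3" and d_pos: "0 < d" and d_le: "d \<le> n - 1"
    and modalg: "taft_module_algebra n lam r m gop xop"
    and lin: "linear_action n gop xop"
    and innerf: "inner_faithful n lam r m gop xop"
    and mu_nz: "\<forall>i<n. mu i \<noteq> 0" and mus_nz: "\<forall>i<n. mus i \<noteq> 0"
    and g_vtx: "\<forall>i<n. gop (vtx i) = vtx ((2 * n - (d + i)) mod n)"
    and g_Fw: "\<forall>i<n. gop (arrow n (Fw i)) = psmult (mu i) (arrow n (Bw ((2 * n - (d + i + 1)) mod n)))"
    and g_Bw: "\<forall>i<n. gop (arrow n (Bw i)) = psmult (mus i) (arrow n (Fw ((2 * n - (d + i + 1)) mod n)))"
    and gamma: "\<forall>i<n. xop (vtx i) =
                  padd (psmult (gamma i) (vtx i))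
                       (psmult (- (gamma i * inverse lam)) (vtx ((2 * n - (d + i)) mod n)))"
  shows
    "(\<forall>j<n. (2 * n - (d + j)) mod n = j \<longrightarrow>
        (\<exists>c cs. quiver_taft_map n lam gop xop gamma (Fw ((j + n - 1) mod n))
                  = psmult (- cs) (arrow n (Fw ((j + n - 1) mod n)))
              \<and> quiver_taft_map n lam gop xop gamma (Bw ((j + n - 1) mod n))
                  = psmult (- (inverse (mu j) * mus ((j + n - 1) mod n) * c)) (arrow n (Fw j))
              \<and> quiver_taft_map n lam gop xop gamma (Fw j)
                  = psmult c (arrow n (Bw ((j + n - 1) mod n)))
              \<and> quiver_taft_map n lam gop xop gamma (Bw j)
                  = psmult cs (arrow n (Bw j))))
   \<and> (\<forall>k<n. (2 * n - (d + k)) mod n = (k + 1) mod n \<and> (2 * n - (d + (k + 1) mod n)) mod n = k \<longrightarrow>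
        (\<exists>c. quiver_taft_map n lam gop xop gamma (Fw k) = psmult c (vtx k)
            \<and> quiver_taft_map n lam gop xop gamma (Bw k) = psmult (lam * mus k * c) (vtx ((k + 1) mod n))
            \<and> (c \<noteq> 0 \<longrightarrow> lam ^ 2 * mu k * mus k = 1)))
   \<and> (\<forall>i<n. (\<forall>j<n. (2 * n - (d + j)) mod n = j \<longrightarrow> i \<noteq> (j + n - 1) mod n \<and> i \<noteq> j)
          \<and> \<not> ((2 * n - (d + i)) mod n = (i + 1) mod n \<and> (2 * n - (d + (i + 1) mod n)) mod n = i)
        \<longrightarrow> quiver_taft_map n lam gop xop gamma (Fw i) = pzero
          \<and> quiver_taft_map n lam gop xop gamma (Bw i) = pzero)"
proof -
  interpret R: refl_act n d r m lam gop xop mu mus gamma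
    by (rule refl_act.intro[OF r_gt1 lam_root lam_prim n_ge3 d_pos d_le modalg lin mu_nz mus_nz
          g_vtx g_Fw g_Bw gamma])
  have P1: "\<forall>j<n. (2 * n - (d + j)) mod n = j \<longrightarrow>
        (\<exists>c cs. quiver_taft_map n lam gop xop gamma (Fw ((j + n - 1) mod n))
                  = psmult (- cs) (arrow n (Fw ((j + n - 1) mod n)))
              \<and> quiver_taft_map n lam gop xop gamma (Bw ((j + n - 1) mod n))
                  = psmult (- (inverse (mu j) * mus ((j + n - 1) mod n) * c)) (arrow n (Fw j))
              \<and> quiver_taft_map n lam gop xop gamma (Fw j)
                  = psmult c (arrow n (Bw ((j + n - 1) mod n)))
              \<and> quiver_taft_map n lam gop xop gamma (Bw j)
                  = psmult cs (arrow n (Bw j)))"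
  proof (intro allI impI)
    fix j assume j: "j < n" and Gj: "(2 * n - (d + j)) mod n = j"
    show "\<exists>c cs. quiver_taft_map n lam gop xop gamma (Fw ((j + n - 1) mod n))
                  = psmult (- cs) (arrow n (Fw ((j + n - 1) mod n)))
              \<and> quiver_taft_map n lam gop xop gamma (Bw ((j + n - 1) mod n))
                  = psmult (- (inverse (mu j) * mus ((j + n - 1) mod n) * c)) (arrow n (Fw j))
              \<and> quiver_taft_map n lam gop xop gamma (Fw j)
                  = psmult c (arrow n (Bw ((j + n - 1) mod n)))
              \<and> quiver_taft_map n lam gop xop gamma (Bw j)
                  = psmult cs (arrow n (Bw j))"
      by (rule R.case1[OF j]) (simp add: R.G_def Gj)
  qed
  have P2: "\<forall>k<n. (2 * n - (d + k)) mod n = (k + 1) mod n \<and> (2 * n - (d + (k + 1) mod n)) mod n = k \<longrightarrow>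
        (\<exists>c. quiver_taft_map n lam gop xop gamma (Fw k) = psmult c (vtx k)
            \<and> quiver_taft_map n lam gop xop gamma (Bw k) = psmult (lam * mus k * c) (vtx ((k + 1) mod n))
            \<and> (c \<noteq> 0 \<longrightarrow> lam ^ 2 * mu k * mus k = 1))"
  proof (intro allI impI)
    fix k assume k: "k < n"
      and H: "(2 * n - (d + k)) mod n = (k + 1) mod n \<and> (2 * n - (d + (k + 1) mod n)) mod n = k"
    have Gk: "R.G k = Suc k mod n" using H unfolding R.G_def by simp
    show "\<exists>c. quiver_taft_map n lam gop xop gamma (Fw k) = psmult c (vtx k)
            \<and> quiver_taft_map n lam gop xop gamma (Bw k) = psmult (lam * mus k * c) (vtx ((k + 1) mod n))
            \<and> (c \<noteq> 0 \<longrightarrow> lam ^ 2 * mu k * mus k = 1)"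
      using R.case2[OF k Gk] by simp
  qed
  have P3: "\<forall>i<n. (\<forall>j<n. (2 * n - (d + j)) mod n = j \<longrightarrow> i \<noteq> (j + n - 1) mod n \<and> i \<noteq> j)
          \<and> \<not> ((2 * n - (d + i)) mod n = (i + 1) mod n \<and> (2 * n - (d + (i + 1) mod n)) mod n = i)
        \<longrightarrow> quiver_taft_map n lam gop xop gamma (Fw i) = pzero
          \<and> quiver_taft_map n lam gop xop gamma (Bw i) = pzero"
  proof (intro allI impI)
    fix i assume i: "i < n"
      and H: "(\<forall>j<n. (2 * n - (d + j)) mod n = j \<longrightarrow> i \<noteq> (j + n - 1) mod n \<and> i \<noteq> j)
          \<and> \<not> ((2 * n - (d + i)) mod n = (i + 1) mod n \<and> (2 * n - (d + (i + 1) mod n)) mod n = i)"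
    have h1: "\<forall>j<n. R.G j = j \<longrightarrow> i \<noteq> (j + n - 1) mod n \<and> i \<noteq> j" using H unfolding R.G_def by blast
    have h2: "\<not> (R.G i = Suc i mod n \<and> R.G (Suc i mod n) = i)" using H unfolding R.G_def by simp
    show "quiver_taft_map n lam gop xop gamma (Fw i) = pzero
          \<and> quiver_taft_map n lam gop xop gamma (Bw i) = pzero"
      by (rule R.case3[OF i h1 h2])
  qed
  show ?thesis using P1 P2 P3 by blast
qed

end
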